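(* Let $c\ge 1$ and $k\ge 1$ be integers and let $n$ satisfy $c+1\le n\le ck+1$. Consider the equivalence relation on $S_n$ generated by the replacement partition of $S_{c+1}$ whose only nontrivial part is $\{x\in S_{c+1}: x_1=1\}$. Then every $k$-squished permutation $w\in S_n$ is equivalent to the identity permutation.
   Context: Permutations are written in one-line notation as words. The order permutation (standardization) of a word $u$ of distinct positive integers of length $\ell$ is the unique $\pi\in S_\ell$ with $\pi_i<\pi_j$ iff $u_i<u_j$. The equivalence is generated by declaring $\phi\equiv\psi$ whenever $\phi=aub$ and $\psi=avb$ for words $a,b,u,v$ with $u,v$ of length $c+1$ whose order permutations both begin with $1$. A permutation of $S_n$ is $k$-squished if for each $j\le k$, the letter $j$ occurs among the first $c(j-1)+1$ positions. *)

theory Defs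
  imports Main
begin

definition perms :: "nat \<Rightarrow> nat list set" where
  "perms n = {w. distinct w \<and> set w = {1..n}}"

definition std :: "nat list \<Rightarrow> nat list" where
  "std u = map (\<lambda>x. card {y \<in> set u. y \<le> x}) u"

definition repl_step :: "nat \<Rightarrow> nat list \<Rightarrow> nat list \<Rightarrow> bool" where
  "repl_step c \<phi> \<psi> \<longleftrightarrow> (\<exists>a u v b. \<phi> = a @ u @ b \<and> \<psi> = a @ v @ b \<and>
      length u = c + 1 \<and> length v = c + 1 \<and> distinct u \<and> distinct v \<and>
      hd (std u) = 1 \<and> hd (std v) = 1)"

definition repl_equiv :: "nat \<Rightarrow> nat \<Rightarrow> nat list \<Rightarrow> nat list \<Rightarrow> bool" where
  "repl_equiv c n = (\<lambda>\<phi> \<psi>. \<phi> \<in> perms n \<and> \<psi> \<in> perms n \<and>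
      (symclp (\<lambda>x y. x \<in> perms n \<and> y \<in> perms n \<and> repl_step c x y))\<^sup>*\<^sup>* \<phi> \<psi>)"

definition id_perm :: "nat \<Rightarrow> nat list" where
  "id_perm n = [1..<n+1]"

definition squished :: "nat \<Rightarrow> nat \<Rightarrow> nat list \<Rightarrow> bool" where
  "squished c k w \<longleftrightarrow> (\<forall>j\<in>{1..k}. j \<in> set (take (c * (j - 1) + 1) w))"

end

theory Submission
  imports Defs "HOL-Library.Multiset"
begin

definition RT :: "nat \<Rightarrow> nat \<Rightarrow> nat list \<Rightarrow> nat list \<Rightarrow> bool" where
  "RT c n = (symclp (\<lambda>x y. x \<in> perms n \<and> y \<in> perms n \<and> repl_step c x y))\<^sup>*\<^sup>*"

definition swp :: "nat list \<Rightarrow> nat \<Rightarrow> nat \<Rightarrow> nat list" where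
  "swp xs i k = xs[i := xs!k, k := xs!i]"

lemma RT_refl: "RT c n x x" by (simp add: RT_def)
lemma RT_trans: "RT c n x y \<Longrightarrow> RT c n y z \<Longrightarrow> RT c n x z"
  unfolding RT_def by (rule rtranclp_trans)
lemma RT_sym: "RT c n x y \<Longrightarrow> RT c n y x"
  unfolding RT_def by (rule rtranclp_symclp_sym)

lemma perms_mset: "w \<in> perms n \<Longrightarrow> mset w' = mset w \<Longrightarrow> w' \<in> perms n"
  unfolding perms_def using mset_eq_imp_distinct_iff mset_eq_setD by blast

lemma perms_swp: "w \<in> perms n \<Longrightarrow> i < length w \<Longrightarrow> k < length w \<Longrightarrow> swp w i k \<in> perms n"
  unfolding perms_def swp_def by simp

lemma perms_len: "w \<in> perms n \<Longrightarrow> length w = n"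
  unfolding perms_def using distinct_card by fastforce

lemma std_hd: "distinct u \<Longrightarrow> u \<noteq> [] \<Longrightarrow> \<forall>x\<in>set u. hd u \<le> x \<Longrightarrow> hd (std u) = 1"
proof -
  assume "u \<noteq> []" "\<forall>x\<in>set u. hd u \<le> x"
  then have "{y \<in> set u. y \<le> hd u} = {hd u}" by force
  then show ?thesis using \<open>u \<noteq> []\<close> by (simp add: std_def hd_map)
qed

lemma window_swap:
  assumes W: "W \<in> perms n" and sc: "s + c < n"
    and piv: "\<forall>t. s < t \<and> t \<le> s + c \<longrightarrow> W!s < W!t"
    and i: "s < i" "i < k" "k \<le> s + c"
  shows "RT c n W (swp W i k)"
proof -
  have len: "length W = n" using perms_len[OF W] .
  define a where "a = take s W"
  define u where "u = take (c+1) (drop s W)"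
  define b where "b = drop (s+c+1) W"
  define v where "v = swp u (i-s) (k-s)"
  have la: "length a = s" using sc len by (simp add: a_def)
  have lu: "length u = c+1" using sc len by (simp add: u_def)
  have Wd: "W = a @ u @ b" unfolding a_def u_def b_def
    by (metis add.commute append_take_drop_id drop_drop)
  have unth: "\<And>t. t < c+1 \<Longrightarrow> u!t = W!(s+t)" using sc len by (simp add: u_def)
  have sw: "swp W i k = a @ v @ b"
  proof -
    have "k - s < Suc c" "i - s < Suc c" "\<not> k < s" "\<not> i < s" using i by auto
    then show ?thesis using la lu unfolding Wd v_def swp_def
      by (simp add: list_update_append nth_append)
  qed
  have dW: "distinct W" using W by (simp add: perms_def)
  have du: "distinct u" using dW Wd by simp
  have dv: "distinct v" using du i lu by (simp add: v_def swp_def)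
  have hu: "hd u = W!s" using lu unth hd_conv_nth[of u] by force
  have hv: "hd v = W!s"
  proof -
    have "v ! 0 = u ! 0" using i lu unfolding v_def swp_def by (simp add: nth_list_update)
    moreover have "v \<noteq> []" "u \<noteq> []" using lu unfolding v_def swp_def by auto
    ultimately show ?thesis using hu by (simp add: hd_conv_nth)
  qed
  have allu: "\<forall>x\<in>set u. hd u \<le> x"
  proof
    fix x assume "x \<in> set u"
    then obtain t where t: "t < c+1" "x = u!t" using lu by (auto simp: in_set_conv_nth)
    show "hd u \<le> x"
    proof (cases "t = 0")
      case True then show ?thesis using t hu unth by simp
    next
      case False then show ?thesis using t hu unth piv by (simp add: less_imp_le)
    qed
  qed
  have sv: "set v = set u" using i lu by (simp add: v_def swp_def)
  have allv: "\<forall>x\<in>set v. hd v \<le> x" using allu sv hu hv by simp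
  have lv: "length v = c+1" using lu by (simp add: v_def swp_def)
  have hsu: "hd (std u) = 1" using std_hd[OF du _ allu] lu by fastforce
  have hsv: "hd (std v) = 1" using std_hd[OF dv _ allv] lv by fastforce
  have step: "repl_step c W (swp W i k)"
    unfolding repl_step_def
    apply (rule exI[of _ a], rule exI[of _ u], rule exI[of _ v], rule exI[of _ b])
    using Wd sw lu lv du dv hsu hsv by auto
  have "swp W i k \<in> perms n" using perms_swp[OF W] i sc len by simp
  then show ?thesis unfolding RT_def using step W
    by (intro r_into_rtranclp) (simp add: symclp_def)
qed

lemma move_front:
  assumes H: "\<forall>p a b q. mset (p@a#b#q) = mset ys \<longrightarrow> RT c n (xs@(p@a#b#q)@zs) (xs@(p@b#a#q)@zs)"
  shows "mset (as@y#bs) = mset ys \<Longrightarrow> RT c n (xs@(as@y#bs)@zs) (xs@(y#as@bs)@zs)"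
proof (induction as arbitrary: bs rule: rev_induct)
  case Nil then show ?case by (simp add: RT_refl)
next
  case (snoc a as0)
  have m: "mset (as0@a#y#bs) = mset ys" using snoc.prems by simp
  have 1: "RT c n (xs@(as0@a#y#bs)@zs) (xs@(as0@y#a#bs)@zs)" using H m by blast
  have m2: "mset (as0@y#(a#bs)) = mset ys" using m by (simp add: add_mset_commute)
  have 2: "RT c n (xs@(as0@y#(a#bs))@zs) (xs@(y#as0@(a#bs))@zs)" using snoc.IH[OF m2] .
  show ?case using RT_trans[OF 1 2] by simp
qed

lemma gen_perm:
  "\<lbrakk>\<forall>p a b q. mset (p@a#b#q) = mset ys \<longrightarrow> RT c n (xs@(p@a#b#q)@zs) (xs@(p@b#a#q)@zs);
    mset ys' = mset ys\<rbrakk> \<Longrightarrow> RT c n (xs@ys@zs) (xs@ys'@zs)"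
proof (induction ys' arbitrary: xs ys)
  case Nil then show ?case by (simp add: RT_refl)
next
  case (Cons y ys1)
  have "y \<in> set ys" using Cons.prems(2) by (metis list.set_intros(1) set_mset_mset union_single_eq_member mset.simps(2))
  then obtain as bs where ys: "ys = as @ y # bs" by (meson split_list)
  have 1: "RT c n (xs@(as@y#bs)@zs) (xs@(y#as@bs)@zs)"
    using move_front[OF Cons.prems(1)] ys by simp
  have H': "\<forall>p a b q. mset (p@a#b#q) = mset (as@bs) \<longrightarrow>
      RT c n ((xs@[y])@(p@a#b#q)@zs) ((xs@[y])@(p@b#a#q)@zs)"
  proof (intro allI impI)
    fix p a b q assume "mset (p@a#b#q) = mset (as@bs)"
    then have "mset ((y#p)@a#b#q) = mset ys" using ys by simp
    then show "RT c n ((xs@[y])@(p@a#b#q)@zs) ((xs@[y])@(p@b#a#q)@zs)"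
      using Cons.prems(1) by fastforce
  qed
  have "mset ys1 = mset (as@bs)" using Cons.prems(2) ys by simp
  then have 2: "RT c n ((xs@[y])@(as@bs)@zs) ((xs@[y])@ys1@zs)" using Cons.IH[OF H'] by blast
  show ?case using RT_trans[OF 1] 2 ys by simp
qed

definition Rj :: "nat \<Rightarrow> nat \<Rightarrow> nat \<Rightarrow> bool" where
  "Rj c n j \<longleftrightarrow> (\<forall>w w'. w \<in> perms n \<longrightarrow> w' \<in> perms n \<longrightarrow> take (j-1) w = [1..<j] \<longrightarrow>
     take (j-1) w' = [1..<j] \<longrightarrow> drop (c*(j-1)+1) w = drop (c*(j-1)+1) w' \<longrightarrow> RT c n w w')"

lemma pre_nth: "take m W = [1..<m+1] \<Longrightarrow> t < m \<Longrightarrow> W!t = t+1"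
proof -
  assume a: "take m W = [1..<m+1]" "t < m"
  have "take m W ! t = W ! t" using a(2) by simp
  moreover have "[1..<m+1] ! t = 1 + t" by (rule nth_upt) (use a(2) in simp)
  ultimately show ?thesis using a(1) by simp
qed

lemma pre_gt:
  assumes W: "W \<in> perms n" and pre: "take m W = [1..<m+1]" and "m \<le> t" "t < n"
  shows "m < W!t"
proof (rule ccontr)
  assume nm: "\<not> m < W!t"
  have len: "length W = n" using perms_len[OF W] .
  have tn: "t < length W" using len \<open>t < n\<close> by simp
  have "W!t \<in> set W" using tn by (rule nth_mem)
  then have "W!t \<in> {1..n}" using W unfolding perms_def by blast
  then have pos: "W!t \<ge> 1" by simp
  define t' where "t' = W!t - 1"
  have tm: "t' < m" using nm pos unfolding t'_def by linarith
  have "W!t' = t' + 1" using pre_nth[OF pre tm] .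
  then have eqv: "W!t' = W!t" using pos unfolding t'_def by linarith
  have dist: "distinct W" using W by (simp add: perms_def)
  have t'n: "t' < length W" using tm \<open>m \<le> t\<close> tn by linarith
  have "t' = t" using nth_eq_iff_index_eq[OF dist t'n tn] eqv by blast
  then show False using tm \<open>m \<le> t\<close> by linarith
qed

lemma swp_nth: "i < length W \<Longrightarrow> k < length W \<Longrightarrow> t < length W \<Longrightarrow>
   swp W i k ! t = (if t = k then W!i else if t = i then W!k else W!t)"
  unfolding swp_def by (simp add: nth_list_update)

lemma swp_len[simp]: "length (swp W i k) = length W" by (simp add: swp_def)

lemma AS:
  assumes c1: "c \<ge> 1" and cn: "c + 1 \<le> n" and prev: "2 \<le> j \<Longrightarrow> Rj c n (j-1)"
    and W: "W \<in> perms n" and pre: "take (j-1) W = [1..<j]" and j1: "j \<ge> 1"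
    and ij: "j - 1 \<le> i" and iL: "Suc i < min (c*(j-1)+1) n"
  shows "RT c n W (swp W i (Suc i))"
proof -
  have len: "length W = n" using perms_len[OF W] .
  have pre': "take (j-1) W = [1..<(j-1)+1]" using pre j1 by simp
  have j2: "2 \<le> j" using ij iL by (cases "j = 1") auto
  have c2: "2 \<le> c"
  proof (rule ccontr)
    assume "\<not> 2 \<le> c" then have "c = 1" using c1 by simp
    then show False using ij iL by simp
  qed
  define s0 where "s0 = min (j-2) (n-1-c)"
  show ?thesis
  proof (cases "Suc i \<le> s0 + c")
    case True
    have s0n: "s0 + c < n" using cn by (simp add: s0_def)
    have s0j: "s0 < j - 1" using j2 by (simp add: s0_def)
    have Ws0: "W!s0 = s0+1" using pre_nth[OF pre' s0j] .
    have piv: "\<forall>t. s0 < t \<and> t \<le> s0 + c \<longrightarrow> W!s0 < W!t"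
    proof (intro allI impI)
      fix t assume t: "s0 < t \<and> t \<le> s0 + c"
      show "W!s0 < W!t"
      proof (cases "t < j - 1")
        case True then show ?thesis using pre_nth[OF pre' True] Ws0 t by simp
      next
        case False
        have "j - 1 < W!t" using pre_gt[OF W pre'] False t s0n by simp
        then show ?thesis using Ws0 s0j by simp
      qed
    qed
    have "s0 < i" using s0j ij by simp
    then show ?thesis using window_swap[OF W s0n piv] True by simp
  next
    case False
    define r where "r = Suc i - c"
    have rc: "r + c = Suc i" using False by (simp add: r_def)
    have jr: "j - 1 \<le> r"
    proof (cases "j - 2 \<le> n - 1 - c")
      case True then have "s0 = j - 2" by (simp add: s0_def)
      then show ?thesis using False rc j2 by linarith
    next
      case F2: False then have "s0 = n - 1 - c" by (simp add: s0_def)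
      then show ?thesis using False iL cn by linarith
    qed
    have cj: "c*(j-1) = c*(j-2) + c"
    proof -
      have "j - 1 = Suc (j-2)" using j2 by simp
      then show ?thesis by simp
    qed
    have rM: "r < c*(j-2)+1" using iL rc cj by simp
    have jM: "j - 2 < c*(j-2)+1"
    proof -
      have "1*(j-2) \<le> c*(j-2)" using c1 by (rule mult_right_mono) simp
      then show ?thesis by linarith
    qed
    have ri: "r < i" using rc c2 by simp
    have rn: "r + c < n" using rc iL by simp
    have jn: "j - 2 < n" using jr rn by simp
    have rn': "r < n" using rn by simp
    have R: "Rj c n (j-1)" using prev j2 .
    have jj: "j - 1 - 1 = j - 2" "j - 1 = (j-2) + 1" using j2 by auto
    have R': "\<And>w w'. w \<in> perms n \<Longrightarrow> w' \<in> perms n \<Longrightarrow> take (j-2) w = [1..<j-1] \<Longrightarrow>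
      take (j-2) w' = [1..<j-1] \<Longrightarrow> drop (c*(j-2)+1) w = drop (c*(j-2)+1) w' \<Longrightarrow> RT c n w w'"
      using R unfolding Rj_def jj(1) by blast
    have preW: "take (j-2) W = [1..<j-1]"
    proof -
      have "take (j-2) W = take (j-2) (take (j-1) W)" by (simp add: min_def)
      also have "\<dots> = take (j-2) [1..<j]" using pre by simp
      also have "\<dots> = [1..<j-1]"
      proof -
        have e: "1 + (j-2) = j-1" using j2 by simp
        have "take (j-2) [1..<j] = [1..<1+(j-2)]" by (rule take_upt) (use j2 in simp)
        then show ?thesis using e by metis
      qed
      finally show ?thesis .
    qed
    define u where "u = swp W (j-2) r"
    have u: "u \<in> perms n" using perms_swp[OF W] jn rn' len by (simp add: u_def)
    have preu: "take (j-2) u = [1..<j-1]" using preW jr by (simp add: u_def swp_def)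
    have dropu: "drop (c*(j-2)+1) u = drop (c*(j-2)+1) W"
      using rM jM by (simp add: u_def swp_def)
    have 1: "RT c n W u" using R'[OF W u preW preu dropu[symmetric]] .
    have Wj: "W!(j-2) = j-1" using pre_nth[OF pre', of "j-2"] j2 by simp
    have ur: "u!r = j-1" using swp_nth[of "j-2" W r r] jn rn' len Wj by (simp add: u_def)
    have piv: "\<forall>t. r < t \<and> t \<le> r + c \<longrightarrow> u!r < u!t"
    proof (intro allI impI)
      fix t assume t: "r < t \<and> t \<le> r + c"
      have tn: "t < n" using t rn by simp
      have "t \<noteq> j - 2" using t jr by linarith
      then have "u!t = W!t" using swp_nth[of "j-2" W r t] jn rn' len tn t jr by (simp add: u_def)
      moreover have "j - 1 < W!t" using pre_gt[OF W pre'] t jr tn by simp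
      ultimately show "u!r < u!t" using ur by simp
    qed
    have 2: "RT c n u (swp u i (Suc i))" using window_swap[OF u rn piv ri] rc by simp
    define W' where "W' = swp W i (Suc i)"
    have in_: "Suc i < n" using iL by simp
    have W': "W' \<in> perms n" using perms_swp[OF W] in_ len by (simp add: W'_def)
    have eq: "swp u i (Suc i) = swp W' (j-2) r"
    proof (rule nth_equalityI)
      show "length (swp u i (Suc i)) = length (swp W' (j-2) r)" by (simp add: u_def W'_def)
    next
      fix t assume "t < length (swp u i (Suc i))"
      then have t: "t < n" using len by (simp add: u_def)
      have d: "j - 2 < r" "r < i" "j-2 \<noteq> i" "j-2 \<noteq> Suc i" "r \<noteq> Suc i" using jr ri j2 by auto
      show "swp u i (Suc i) ! t = swp W' (j-2) r ! t"
        unfolding u_def W'_def using t d jn rn' in_ len by (simp add: swp_nth)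
    qed
    have u': "swp W' (j-2) r \<in> perms n" using perms_swp[OF W'] jn rn' len by (simp add: W'_def)
    have preW': "take (j-2) W' = [1..<j-1]" using preW ij jj by (simp add: W'_def swp_def)
    have preu': "take (j-2) (swp W' (j-2) r) = [1..<j-1]" using preW' jr by (simp add: swp_def)
    have dropu': "drop (c*(j-2)+1) (swp W' (j-2) r) = drop (c*(j-2)+1) W'"
      using rM jM by (simp add: swp_def)
    have 3: "RT c n W' (swp W' (j-2) r)" using R'[OF W' u' preW' preu' dropu'[symmetric]] .
    show ?thesis using RT_trans[OF RT_trans[OF 1 2]] RT_sym[OF 3] eq by (simp add: W'_def)
  qed
qed

lemma swp_app: "swp (us @ a # b # vs) (length us) (Suc (length us)) = us @ b # a # vs"
  by (simp add: swp_def list_update_append nth_append)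

lemma perms_mset_eq: "w \<in> perms n \<Longrightarrow> w' \<in> perms n \<Longrightarrow> mset w = mset w'"
proof -
  assume a: "w \<in> perms n" "w' \<in> perms n"
  have "mset_set (set w) = mset w" using a(1) unfolding perms_def by (intro mset_set_set) simp
  moreover have "mset_set (set w') = mset w'" using a(2) unfolding perms_def by (intro mset_set_set) simp
  moreover have "set w = set w'" using a by (simp add: perms_def)
  ultimately show ?thesis by simp
qed

lemma split3: "j \<le> L \<Longrightarrow> w = take j w @ drop j (take L w) @ drop L w"
proof -
  assume a: "j \<le> L"
  have "take L w = take j (take L w) @ drop j (take L w)" by (rule append_take_drop_id[symmetric])
  moreover have "take j (take L w) = take j w" using a by (simp add: min_def)
  ultimately have "take L w = take j w @ drop j (take L w)" by simp
  then show ?thesis by (metis append.assoc append_take_drop_id)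
qed

lemma R_step:
  assumes c1: "c \<ge> 1" and cn: "c + 1 \<le> n" and prev: "2 \<le> j \<Longrightarrow> Rj c n (j-1)" and j1: "j \<ge> 1"
  shows "Rj c n j"
  unfolding Rj_def
proof (intro allI impI)
  fix w w' assume w: "w \<in> perms n" and w': "w' \<in> perms n" and pw: "take (j-1) w = [1..<j]"
    and pw': "take (j-1) w' = [1..<j]" and dw: "drop (c*(j-1)+1) w = drop (c*(j-1)+1) w'"
  define L where "L = c*(j-1)+1"
  define xs where "xs = [1..<j]"
  define ys where "ys = drop (j-1) (take L w)"
  define ys' where "ys' = drop (j-1) (take L w')"
  define zs where "zs = drop L w"
  have jL: "j - 1 \<le> L"
  proof -
    have "1*(j-1) \<le> c*(j-1)" using c1 by (rule mult_right_mono) simp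
    then show ?thesis unfolding L_def by linarith
  qed
  have we: "w = xs @ ys @ zs" using split3[OF jL, of w] pw by (simp add: xs_def ys_def zs_def)
  have we': "w' = xs @ ys' @ zs" using split3[OF jL, of w'] pw' dw by (simp add: xs_def ys'_def zs_def L_def)
  have "mset w = mset w'" using perms_mset_eq[OF w w'] .
  then have mys: "mset ys' = mset ys" using we we' by simp
  have lxs: "length xs = j - 1" using j1 by (simp add: xs_def)
  have lw: "length w = n" using perms_len[OF w] .
  have tL: "take L w = xs @ ys"
  proof -
    have "take L w = take (j-1) (take L w) @ drop (j-1) (take L w)" by (rule append_take_drop_id[symmetric])
    moreover have "take (j-1) (take L w) = take (j-1) w" using jL by (simp add: min_def)
    ultimately show ?thesis using pw by (simp add: xs_def ys_def)
  qed
  have lys: "length xs + length ys = min L n"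
  proof -
    have "length (take L w) = min L n" using lw by simp
    then show ?thesis using tL by simp
  qed
  have H: "\<forall>p a b q. mset (p@a#b#q) = mset ys \<longrightarrow> RT c n (xs@(p@a#b#q)@zs) (xs@(p@b#a#q)@zs)"
  proof (intro allI impI)
    fix p a b q assume m: "mset (p@a#b#q) = mset ys"
    define W where "W = xs@(p@a#b#q)@zs"
    have "mset W = mset w" using m we by (simp add: W_def)
    then have W: "W \<in> perms n" using perms_mset[OF w] by blast
    have pre: "take (j-1) W = [1..<j]" using lxs by (simp add: W_def xs_def)
    have "length (p@a#b#q) = length ys" using m by (metis size_mset mset_append)
    then have lt: "Suc (j - 1 + length p) < length xs + length ys" using lxs by simp
    have e: "length xs + length ys = min (c*(j-1)+1) n" using lys by (simp add: L_def)
    have iL: "Suc (j - 1 + length p) < min (c*(j-1)+1) n" using lt e by linarith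
    have "RT c n W (swp W (j - 1 + length p) (Suc (j - 1 + length p)))"
      using AS[OF c1 cn prev W pre j1 le_add1 iL] by simp
    moreover have "swp W (j - 1 + length p) (Suc (j - 1 + length p)) = xs@(p@b#a#q)@zs"
      using swp_app[of "xs@p" a b "q@zs"] lxs by (simp add: W_def)
    ultimately show "RT c n (xs@(p@a#b#q)@zs) (xs@(p@b#a#q)@zs)" by (simp add: W_def)
  qed
  show "RT c n w w'" using gen_perm[OF H mys] we we' by simp
qed

lemma R_all: "c \<ge> 1 \<Longrightarrow> c + 1 \<le> n \<Longrightarrow> j \<ge> 1 \<Longrightarrow> Rj c n j"
proof (induction j rule: less_induct)
  case (less j)
  show ?case by (rule R_step) (use less in auto)
qed

lemma iter:
  assumes c1: "c \<ge> 1" and cn: "c + 1 \<le> n" and w: "w \<in> perms n"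
    and sq: "\<forall>i<n. i \<le> c*(w!i - 1)"
  shows "j \<le> n \<Longrightarrow> \<exists>v. RT c n w v \<and> v \<in> perms n \<and> take j v = [1..<j+1] \<and> (\<forall>i<n. i \<le> c*(v!i - 1))"
proof (induction j)
  case 0 show ?case using w sq by (intro exI[of _ w]) (simp add: RT_refl)
next
  case (Suc j)
  then obtain v where rv: "RT c n w v" and v: "v \<in> perms n" and pv: "take j v = [1..<j+1]"
    and sv: "\<forall>i<n. i \<le> c*(v!i - 1)" by auto
  have lv: "length v = n" using perms_len[OF v] .
  define L where "L = c*j+1"
  define xs where "xs = [1..<j+1]"
  define seg where "seg = drop j (take L v)"
  define zs where "zs = drop L v"
  have jL: "j \<le> L"
  proof -
    have "1*j \<le> c*j" using c1 by (rule mult_right_mono) simp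
    then show ?thesis unfolding L_def by linarith
  qed
  have tL: "take L v = xs @ seg"
  proof -
    have "take L v = take j (take L v) @ drop j (take L v)" by (rule append_take_drop_id[symmetric])
    moreover have "take j (take L v) = take j v" using jL by (simp add: min_def)
    ultimately show ?thesis using pv by (simp add: xs_def seg_def)
  qed
  have ve: "v = xs @ seg @ zs" using tL by (metis append.assoc append_take_drop_id zs_def)
  have lxs: "length xs = j" by (simp add: xs_def)
  have "j + 1 \<in> set v" using v Suc.prems unfolding perms_def by auto
  then obtain t where t: "t < n" "v!t = j+1" using lv by (auto simp: in_set_conv_nth)
  have "t \<le> c*j" using sv t by fastforce
  then have tLt: "t < L" by (simp add: L_def)
  have "j + 1 \<in> set (take L v)" using t tLt lv by (auto simp: in_set_conv_nth intro!: exI[of _ t])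
  moreover have "j + 1 \<notin> set xs" by (simp add: xs_def)
  ultimately have jseg: "j + 1 \<in> set seg" using tL by simp
  define seg' where "seg' = (j+1) # remove1 (j+1) seg"
  define v' where "v' = xs @ seg' @ zs"
  have mseg: "mset seg' = mset seg" using jseg by (simp add: seg'_def)
  have "mset v' = mset v" using ve mseg by (simp add: v'_def)
  then have v': "v' \<in> perms n" using perms_mset[OF v] by blast
  have lv': "length v' = n" using perms_len[OF v'] .
  have lA: "length (xs @ seg') = min L n"
  proof -
    have "length (xs @ seg') = length (take L v)" using tL mseg by (metis length_append size_mset)
    then show ?thesis using lv by simp
  qed
  have pv': "take j v' = [1..<j+1]" using lxs by (simp add: v'_def xs_def)
  have dv': "drop L v' = drop L v"
  proof (cases "L \<le> n")
    case True then show ?thesis using lA by (simp add: v'_def zs_def)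
  next
    case False then show ?thesis using lv lv' by simp
  qed
  have R: "Rj c n (Suc j)" using R_all[OF c1 cn] by simp
  have "RT c n v v'" using R v v' pv pv' dv' unfolding Rj_def L_def by simp
  then have rv': "RT c n w v'" using RT_trans[OF rv] by blast
  have pv'': "take (Suc j) v' = [1..<Suc j+1]" using lxs by (simp add: v'_def xs_def seg'_def)
  have sv': "\<forall>i<n. i \<le> c*(v'!i - 1)"
  proof (intro allI impI)
    fix i assume i: "i < n"
    show "i \<le> c*(v'!i - 1)"
    proof (cases "i < j")
      case True
      have "v'!i = i + 1" using pre_nth[OF pv' True] .
      moreover have "1*i \<le> c*i" using c1 by (rule mult_right_mono) simp
      ultimately show ?thesis by simp
    next
      case False
      show ?thesis
      proof (cases "i < L")
        case True
        have "j < v'!i" using pre_gt[OF v' pv'] False i by simp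
        then have "c*j \<le> c*(v'!i - 1)" by (intro mult_le_mono2) simp
        moreover have "i \<le> c*j" using True unfolding L_def by linarith
        ultimately show ?thesis by linarith
      next
        case F2: False
        have "v'!i = v!i"
        proof -
          have "L \<le> n" using F2 i by simp
          then have la: "length (xs @ seg') = L" using lA by simp
          have "v'!i = zs!(i - L)" using la F2 unfolding v'_def
            by (metis append.assoc nth_append not_less)
          also have "\<dots> = v!i" using F2 i lv by (simp add: zs_def)
          finally show ?thesis .
        qed
        then show ?thesis using sv i by simp
      qed
    qed
  qed
  show ?case using rv' v' pv'' sv' by auto
qed

lemma sq_conv:
  assumes w: "w \<in> perms n" and sq: "squished c k w" and nk: "n \<le> c*k+1"
  shows "\<forall>i<n. i \<le> c*(w!i - 1)"
proof (intro allI impI)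
  fix i assume i: "i < n"
  have lw: "length w = n" using perms_len[OF w] .
  define m where "m = w!i"
  have "m \<in> set w" using i lw by (simp add: m_def)
  then have m: "m \<in> {1..n}" using w by (simp add: perms_def)
  show "i \<le> c*(w!i - 1)"
  proof (cases "m \<le> k")
    case True
    then have "m \<in> set (take (c*(m-1)+1) w)" using sq m unfolding squished_def by auto
    then obtain t where t: "t < length (take (c*(m-1)+1) w)" "take (c*(m-1)+1) w ! t = m"
      by (auto simp: in_set_conv_nth)
    have tn: "t < n" "t < c*(m-1)+1" using t lw by auto
    have wt: "w!t = w!i" using t tn by (simp add: m_def)
    have "distinct w" using w by (simp add: perms_def)
    then have "t = i" using nth_eq_iff_index_eq wt tn i lw by metis
    then show ?thesis using tn by (simp add: m_def)
  next
    case False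
    then have "k \<le> m - 1" by simp
    then have ck: "c*k \<le> c*(m-1)" by (rule mult_le_mono2)
    have "i \<le> c*k" using nk i by linarith
    then show ?thesis using ck unfolding m_def by linarith
  qed
qed

theorem lemma3p2:
  fixes c k n :: nat and w :: "nat list"
  assumes "c \<ge> 1" and "k \<ge> 1" and "c + 1 \<le> n" and "n \<le> c * k + 1"
    and "w \<in> perms n" and "squished c k w"
  shows "repl_equiv c n w (id_perm n)"
proof -
  have sq: "\<forall>i<n. i \<le> c*(w!i - 1)" using sq_conv assms by blast
  obtain v where rv: "RT c n w v" and v: "v \<in> perms n" and pv: "take n v = [1..<n+1]"
    using iter[OF assms(1) assms(3) assms(5) sq, of n] by auto
  have "v = [1..<n+1]" using pv perms_len[OF v] by simp
  then have vid: "v = id_perm n" by (simp add: id_perm_def)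
  have idp: "id_perm n \<in> perms n" by (simp add: id_perm_def perms_def atLeastLessThanSuc_atLeastAtMost del: upt_Suc)
  show ?thesis unfolding repl_equiv_def using assms(5) idp rv vid by (simp add: RT_def)
qed

end
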